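(* Let $f$ satisfy $(\mathcal A)$, $t_0>0$, $q\ge\frac12$, $p>1$, $y:[t_0,+\infty[\to\mathcal H$ continuously differentiable and $\lambda:[t_0,+\infty[\to\,]0,+\infty[$ continuous, with $\tau(t)=\frac{1}{q^q}\big(t_0+\int_{t_0}^t[\lambda(r)]^{1/q}dr\big)^q$, such that $\dot y(t)+\dot\tau(t)\nabla f(y(t))=0$ and $[\lambda(t)]^p\|\nabla f(y(t))\|^{p-1}=1$ for all $t\ge t_0$. Then there exists $C_1>0$ with $\tau(t)\ge C_1(t-t_0)^{pq}$ for all $t\ge t_0$.
   Context: $\mathcal H$ is a real Hilbert space. Assumption $(\mathcal A)$: $f:\mathcal H\to\mathbb R$ is convex and continuously differentiable, $\operatorname{argmin}_{\mathcal H} f\neq\emptyset$, and $\nabla f$ is Lipschitz continuous on bounded subsets of $\mathcal H$. *)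

theory Defs
  imports "HOL-Analysis.Analysis"
begin

definition tau_fun :: "real \<Rightarrow> real \<Rightarrow> (real \<Rightarrow> real) \<Rightarrow> real \<Rightarrow> real" where
  "tau_fun q t0 lam t =
     (1 / q powr q) * (t0 + integral {t0..t} (\<lambda>r. lam r powr (1 / q))) powr q"

end

theory Submission
  imports Defs
begin


lemma conv_tangent:
  fixes f :: "'a::real_inner \<Rightarrow> real"
  assumes cv: "convex_on UNIV f" and d: "\<And>x. (f has_derivative (\<lambda>h. gradf x \<bullet> h)) (at x)"
  shows "f z \<ge> f x + gradf x \<bullet> (z - x)"
proof -
  define h where "h = (\<lambda>s::real. f (x + s *\<^sub>R (z - x)))"
  have "convex_on UNIV h" unfolding convex_on_def
  proof (intro conjI ballI allI impI)
    fix a b u v :: real assume uv: "0 \<le> u" "0 \<le> v" "u + v = 1"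
    have e: "u *\<^sub>R (x + a *\<^sub>R (z - x)) + v *\<^sub>R (x + b *\<^sub>R (z - x)) = x + (u * a + v * b) *\<^sub>R (z - x)"
    proof -
      have "u *\<^sub>R (x + a *\<^sub>R (z - x)) + v *\<^sub>R (x + b *\<^sub>R (z - x)) = (u + v) *\<^sub>R x + (u * a + v * b) *\<^sub>R (z - x)"
        by (simp add: algebra_simps)
      then show ?thesis using uv by simp
    qed
    have "f (u *\<^sub>R (x + a *\<^sub>R (z - x)) + v *\<^sub>R (x + b *\<^sub>R (z - x))) \<le> u * f (x + a *\<^sub>R (z - x)) + v * f (x + b *\<^sub>R (z - x))"
      using cv uv unfolding convex_on_def by blast
    then show "h (u *\<^sub>R a + v *\<^sub>R b) \<le> u * h a + v * h b" unfolding h_def using e by simp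
  qed simp
  moreover have "(h has_field_derivative (gradf x \<bullet> (z - x))) (at 0 within UNIV)"
  proof -
    have l: "((\<lambda>s::real. x + s *\<^sub>R (z - x)) has_derivative (\<lambda>s. s *\<^sub>R (z - x))) (at 0)"
      by (auto intro!: derivative_eq_intros)
    have "(h has_derivative (\<lambda>s. gradf x \<bullet> (s *\<^sub>R (z - x)))) (at 0)"
      unfolding h_def using has_derivative_compose[OF l d[of "x + 0 *\<^sub>R (z - x)"]] by simp
    moreover have "(\<lambda>s. s * (gradf x \<bullet> (z - x))) = (*) (gradf x \<bullet> (z - x))" by (auto simp: mult.commute)
    ultimately show ?thesis unfolding has_field_derivative_def by simp
  qed
  ultimately have "h 1 - h 0 \<ge> (gradf x \<bullet> (z - x)) * (1 - 0)"
    by (intro convex_on_imp_above_tangent[where A=UNIV]) auto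
  then show ?thesis by (simp add: h_def)
qed



lemma decr_within:
  fixes F F' :: "real \<Rightarrow> real"
  assumes ab: "a \<le> b"
    and d: "\<And>x. x \<in> {a..b} \<Longrightarrow> (F has_real_derivative F' x) (at x within {a..b})"
    and n: "\<And>x. x \<in> {a..b} \<Longrightarrow> F' x \<le> 0"
  shows "F b \<le> F a"
proof (rule DERIV_nonpos_imp_decreasing_open[OF ab])
  fix x assume "a < x" "x < b"
  then have "(F has_real_derivative F' x) (at x)"
    using d[of x] at_within_Icc_at[of a x b] by auto
  then show "\<exists>y. (F has_real_derivative y) (at x) \<and> y \<le> 0" using n[of x] \<open>a<x\<close> \<open>x<b\<close> by auto
next
  show "continuous_on {a..b} F"
    unfolding continuous_on_eq_continuous_within using d DERIV_continuous by blast
qed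

lemma dini_decr:
  fixes \<phi> :: "real \<Rightarrow> real"
  assumes ab: "a \<le> b" and cont: "continuous_on {a..b} \<phi>"
    and dn: "\<And>t e. t \<in> {a..<b} \<Longrightarrow> e > 0 \<Longrightarrow> \<exists>d>0. \<forall>x. t < x \<and> x < t + d \<longrightarrow> \<phi> x \<le> \<phi> t + e * (x - t)"
  shows "\<phi> b \<le> \<phi> a"
proof -
  have key: "\<phi> b \<le> \<phi> a + e * (b - a)" if e: "e > 0" for e
  proof -
    define S where "S = {x\<in>{a..b}. \<forall>z\<in>{a..x}. \<phi> z \<le> \<phi> a + e * (z - a)}"
    have aS: "a \<in> S" using ab by (auto simp: S_def)
    have bdd: "bdd_above S" by (auto simp: S_def bdd_above_def)
    define c where "c = Sup S"
    have ac: "a \<le> c" using cSup_upper[OF aS bdd] c_def by simp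
    have cb: "c \<le> b" unfolding c_def using aS by (intro cSup_least) (auto simp: S_def)
    have below: "\<phi> z \<le> \<phi> a + e * (z - a)" if "a \<le> z" "z < c" for z
    proof -
      obtain x where "x \<in> S" "z < x" using less_cSup_iff[OF _ bdd, of z] aS \<open>z < c\<close> c_def by auto
      then show ?thesis using that by (auto simp: S_def)
    qed
    have atc: "\<phi> c \<le> \<phi> a + e * (c - a)"
    proof (rule ccontr)
      assume "\<not> ?thesis"
      then have gap: "\<phi> c - (\<phi> a + e * (c - a)) > 0" by simp
      then have ca: "c \<noteq> a" by auto
      have "continuous (at c within {a..b}) \<phi>" using cont ac cb unfolding continuous_on_eq_continuous_within by auto
      then obtain \<delta> where \<delta>: "\<delta> > 0" "\<forall>z\<in>{a..b}. dist z c < \<delta> \<longrightarrow> dist (\<phi> z) (\<phi> c) < \<phi> c - (\<phi> a + e * (c - a))"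
        using gap unfolding continuous_within_eps_delta by blast
      define z where "z = max a (c - \<delta>/2)"
      have z: "a \<le> z" "z < c" "z \<le> b" "dist z c < \<delta>" using ac ca \<delta> cb by (auto simp: z_def dist_real_def)
      have "\<phi> z \<le> \<phi> a + e * (z - a)" using below z by auto
      moreover have "e * (z - a) \<le> e * (c - a)" using e z by auto
      moreover have "dist (\<phi> z) (\<phi> c) < \<phi> c - (\<phi> a + e * (c - a))" using \<delta> z by auto
      ultimately show False by (auto simp: dist_real_def)
    qed
    have cS: "c \<in> S" unfolding S_def
    proof (intro CollectI conjI ballI)
      show "c \<in> {a..b}" using ac cb by simp
      fix z assume "z \<in> {a..c}"
      then show "\<phi> z \<le> \<phi> a + e * (z - a)" using below atc by (cases "z = c") auto
    qed
    have "c = b"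
    proof (rule ccontr)
      assume "c \<noteq> b"
      then have "c < b" using cb by simp
      then obtain d where d: "d > 0" "\<forall>x. c < x \<and> x < c + d \<longrightarrow> \<phi> x \<le> \<phi> c + e * (x - c)"
        using dn[of c e] ac e by auto
      define c' where "c' = min b (c + d/2)"
      have "c' \<in> S" unfolding S_def
      proof (intro CollectI conjI ballI)
        show "c' \<in> {a..b}" using ac \<open>c<b\<close> d by (auto simp: c'_def)
        fix z assume z: "z \<in> {a..c'}"
        show "\<phi> z \<le> \<phi> a + e * (z - a)"
        proof (cases "z \<le> c")
          case True then show ?thesis using cS z by (auto simp: S_def)
        next
          case False
          then have "\<phi> z \<le> \<phi> c + e * (z - c)" using d z by (auto simp: c'_def)
          then show ?thesis using atc by (simp add: algebra_simps)
        qed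
      qed
      then have "c' \<le> c" using cSup_upper[OF _ bdd] c_def by simp
      then show False using \<open>c<b\<close> d by (auto simp: c'_def)
    qed
    then show ?thesis using cS by (auto simp: S_def)
  qed
  show ?thesis
  proof (rule field_le_epsilon)
    fix e :: real assume e: "e > 0"
    have "\<phi> b \<le> \<phi> a + (e / (b - a + 1)) * (b - a)" using key[of "e / (b - a + 1)"] e ab by auto
    also have "(e / (b - a + 1)) * (b - a) \<le> e" using e ab by (auto simp: field_simps)
    finally show "\<phi> b \<le> \<phi> a + e" by simp
  qed
qed



lemma dini_step:
  fixes gradf :: "'a::real_inner \<Rightarrow> 'a" and y :: "real \<Rightarrow> 'a"
  assumes mono: "\<And>x z. (gradf x - gradf z) \<bullet> (x - z) \<ge> 0"
    and lip: "\<And>B. bounded B \<Longrightarrow> \<exists>L. \<forall>x\<in>B. \<forall>z\<in>B. norm (gradf x - gradf z) \<le> L * norm (x - z)"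
    and yd: "(y has_vector_derivative v) (at t within {t<..})"
    and vode: "v = - c *\<^sub>R gradf (y t)" and c: "c > 0" and e: "e > 0"
  shows "\<exists>d>0. \<forall>x. t < x \<and> x < t + d \<longrightarrow> (norm (gradf (y x)))\<^sup>2 \<le> (norm (gradf (y t)))\<^sup>2 + e * (x - t)"
proof -
  obtain L where L: "\<forall>x\<in>ball (y t) 1. \<forall>z\<in>ball (y t) 1. norm (gradf x - gradf z) \<le> L * norm (x - z)"
    using lip[of "ball (y t) 1"] by auto
  define L0 where "L0 = \<bar>L\<bar>"
  have L0: "\<forall>x\<in>ball (y t) 1. \<forall>z\<in>ball (y t) 1. norm (gradf x - gradf z) \<le> L0 * norm (x - z)"
  proof (intro ballI)
    fix x z assume "x \<in> ball (y t) 1" "z \<in> ball (y t) 1"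
    then have "norm (gradf x - gradf z) \<le> L * norm (x - z)" using L by auto
    also have "\<dots> \<le> L0 * norm (x - z)" unfolding L0_def by (intro mult_right_mono) auto
    finally show "norm (gradf x - gradf z) \<le> L0 * norm (x - z)" .
  qed
  have L0nn: "L0 \<ge> 0" by (simp add: L0_def)
  define M where "M = norm v + 1"
  have M: "M \<ge> 1" by (simp add: M_def)
  define \<delta> where "\<delta> = min 1 (e * c / (4 * (L0 * M + 1)))"
  have \<delta>: "\<delta> > 0" "\<delta> \<le> 1" "\<delta> \<le> e * c / (4 * (L0 * M + 1))"
  proof -
    have "L0 * M \<ge> 0" using L0nn M by simp
    then have "e * c / (4 * (L0 * M + 1)) > 0" using e c by (intro divide_pos_pos) auto
    then show "\<delta> > 0" "\<delta> \<le> 1" "\<delta> \<le> e * c / (4 * (L0 * M + 1))" by (auto simp: \<delta>_def)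
  qed
  obtain d1 where d1: "d1 > 0" "\<forall>x\<in>{t<..}. norm (x - t) < d1 \<longrightarrow> norm (y x - y t - (x - t) *\<^sub>R v) \<le> \<delta> * norm (x - t)"
    using yd \<delta>(1) unfolding has_vector_derivative_def has_derivative_within_alt by blast
  define d where "d = min d1 (min (1 / M) (e / (2 * (L0 * M)\<^sup>2 + 1)))"
  have "e / (2 * (L0 * M)\<^sup>2 + 1) > 0" using e by (intro divide_pos_pos) (auto intro: add_nonneg_pos)
  then have dpos: "d > 0" using d1 M e by (auto simp: d_def)
  show ?thesis
  proof (intro exI[of _ d] conjI dpos allI impI)
    fix x assume x: "t < x \<and> x < t + d"
    define h where "h = x - t"
    have h: "h > 0" "h < d1" "h < 1 / M" "h < e / (2 * (L0 * M)\<^sup>2 + 1)" using x by (auto simp: h_def d_def)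
    define r where "r = y x - y t - h *\<^sub>R v"
    have r: "norm r \<le> \<delta> * h" using d1(2)[rule_format, of x] x h by (auto simp: r_def h_def)
    define \<Delta> where "\<Delta> = y x - y t"
    have \<Delta>r: "\<Delta> = r + h *\<^sub>R v" by (simp add: r_def \<Delta>_def)
    have "norm \<Delta> \<le> norm r + h * norm v" using \<Delta>r h norm_triangle_ineq[of r "h *\<^sub>R v"] by simp
    also have "\<dots> \<le> \<delta> * h + h * norm v" using r by simp
    also have "\<dots> \<le> M * h" using \<delta> h by (simp add: M_def algebra_simps)
    finally have \<Delta>M: "norm \<Delta> \<le> M * h" .
    have "M * h < 1" using h M by (simp add: field_simps)
    then have yx: "y x \<in> ball (y t) 1" using \<Delta>M by (simp add: dist_norm \<Delta>_def norm_minus_commute)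
    define G where "G = gradf (y t)"
    define D where "D = gradf (y x) - G"
    have DL: "norm D \<le> L0 * norm \<Delta>" using L0 yx by (simp add: D_def G_def \<Delta>_def)
    also have "\<dots> \<le> L0 * (M * h)" using \<Delta>M L0nn by (intro mult_left_mono) auto
    finally have DM: "norm D \<le> L0 * M * h" by simp
    have "0 \<le> D \<bullet> \<Delta>" using mono[of "y x" "y t"] by (simp add: D_def G_def \<Delta>_def)
    also have "D \<bullet> \<Delta> = D \<bullet> r - h * c * (D \<bullet> G)" using \<Delta>r vode by (simp add: G_def inner_add_right inner_diff_right)
    finally have "h * c * (D \<bullet> G) \<le> D \<bullet> r" by simp
    also have "\<dots> \<le> norm D * norm r" by (rule Cauchy_Schwarz_ineq2[THEN order_trans[OF abs_ge_self]])
    also have "\<dots> \<le> (L0 * M * h) * (\<delta> * h)" using DM r by (intro mult_mono) (auto intro: order_trans[OF norm_ge_zero])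
    finally have "h * c * (D \<bullet> G) \<le> h * (L0 * M * \<delta> * h)" by (simp add: algebra_simps)
    then have "c * (D \<bullet> G) \<le> L0 * M * \<delta> * h" using h by (simp add: mult.assoc)
    moreover have "L0 * M * \<delta> * h \<le> c * (e * h / 4)"
    proof -
      have "L0 * M * \<delta> \<le> (L0 * M + 1) * (e * c / (4 * (L0 * M + 1)))"
        using \<delta> L0nn M by (intro mult_mono) auto
      also have "\<dots> = c * e / 4"
      proof -
        have "L0 * M + 1 > 0" using L0nn M by (smt (verit) mult_nonneg_nonneg)
        then show ?thesis by (simp add: field_simps)
      qed
      finally show ?thesis using h by (simp add: field_simps mult_right_mono)
    qed
    ultimately have "c * (D \<bullet> G) \<le> c * (e * h / 4)" by linarith
    then have DG: "D \<bullet> G \<le> e * h / 4" using c by (simp add: mult_le_cancel_left_pos)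
    have DD: "(norm D)\<^sup>2 \<le> e * h / 2"
    proof -
      have "(norm D)\<^sup>2 \<le> (L0 * M * h)\<^sup>2" using DM by (intro power_mono) auto
      also have "\<dots> = ((L0 * M)\<^sup>2 * h) * h" by (simp add: power2_eq_square)
      also have "(L0 * M)\<^sup>2 * h \<le> e / 2"
      proof -
        have "(L0 * M)\<^sup>2 * h \<le> (L0 * M)\<^sup>2 * (e / (2 * (L0 * M)\<^sup>2 + 1))" using h by (intro mult_left_mono) auto
        also have "\<dots> \<le> e / 2"
        proof -
          have p: "(L0 * M)\<^sup>2 \<ge> 0" by simp
          have pos: "2 * (L0 * M)\<^sup>2 + 1 > 0" using p by linarith
          have q: "(L0 * M)\<^sup>2 / (2 * (L0 * M)\<^sup>2 + 1) \<le> 1/2" using pos by (simp add: pos_divide_le_eq)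
          have "(L0 * M)\<^sup>2 * (e / (2 * (L0 * M)\<^sup>2 + 1)) = e * ((L0 * M)\<^sup>2 / (2 * (L0 * M)\<^sup>2 + 1))" by simp
          also have "\<dots> \<le> e * (1/2)" using q e by (intro mult_left_mono) auto
          finally show ?thesis by simp
        qed
        finally show ?thesis .
      qed
      then have "((L0 * M)\<^sup>2 * h) * h \<le> (e / 2) * h" using h by (intro mult_right_mono) auto
      finally show ?thesis by simp
    qed
    have "(norm (gradf (y x)))\<^sup>2 = (norm (G + D))\<^sup>2" by (simp add: D_def)
    also have "\<dots> = (norm G)\<^sup>2 + 2 * (D \<bullet> G) + (norm D)\<^sup>2"
      by (simp add: power2_norm_eq_inner inner_add_left inner_add_right inner_commute)
    also have "\<dots> \<le> (norm G)\<^sup>2 + e * h" using DG DD by simp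
    finally show "(norm (gradf (y x)))\<^sup>2 \<le> (norm (gradf (y t)))\<^sup>2 + e * (x - t)" by (simp add: G_def h_def)
  qed
qed

lemma deriv_unique_Icc:
  fixes F :: "real \<Rightarrow> real"
  assumes "a \<le> t" "t < b" "(F has_real_derivative D1) (at t within {a..b})"
    "(F has_real_derivative D2) (at t within {a..b})"
  shows "D1 = D2"
proof -
  have nb: "at t within {a..b} \<noteq> bot"
  proof (cases "t = a")
    case True then show ?thesis using assms at_within_Icc_at_right[of a b] by simp
  next
    case False then show ?thesis using assms at_within_Icc_at[of a t b] by simp
  qed
  show ?thesis
    using vector_derivative_unique_within[OF nb] assms(3,4)
    by (auto simp: has_real_derivative_iff_has_vector_derivative)
qed

theorem mainTheorem6:
  fixes f :: "'a::{real_inner, complete_space} \<Rightarrow> real"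
    and gradf :: "'a \<Rightarrow> 'a"
    and y y' :: "real \<Rightarrow> 'a"
    and lam :: "real \<Rightarrow> real"
    and tau' :: "real \<Rightarrow> real"
    and t0 q p :: real
  assumes f_convex: "convex_on UNIV f"
    and f_grad: "\<And>x. (f has_derivative (\<lambda>h. gradf x \<bullet> h)) (at x)"
    and grad_cont: "continuous_on UNIV gradf"
    and argmin_ne: "\<exists>x. \<forall>z. f x \<le> f z"
    and grad_lip_bdd: "\<And>B. bounded B \<Longrightarrow>
            \<exists>L. \<forall>x\<in>B. \<forall>z\<in>B. norm (gradf x - gradf z) \<le> L * norm (x - z)"
    and t0_pos: "t0 > 0"
    and q_ge: "q \<ge> 1/2"
    and p_gt: "p > 1"
    and y_deriv: "\<And>t. t \<ge> t0 \<Longrightarrow> (y has_vector_derivative y' t) (at t within {t0..})"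
    and y'_cont: "continuous_on {t0..} y'"
    and lam_cont: "continuous_on {t0..} lam"
    and lam_pos: "\<And>t. t \<ge> t0 \<Longrightarrow> lam t > 0"
    and tau_deriv: "\<And>t. t \<ge> t0 \<Longrightarrow>
            (tau_fun q t0 lam has_real_derivative tau' t) (at t within {t0..})"
    and ode: "\<And>t. t \<ge> t0 \<Longrightarrow> y' t + tau' t *\<^sub>R gradf (y t) = 0"
    and lam_rel: "\<And>t. t \<ge> t0 \<Longrightarrow> lam t powr p * norm (gradf (y t)) powr (p - 1) = 1"
  shows "\<exists>C1>0. \<forall>t\<ge>t0. tau_fun q t0 lam t \<ge> C1 * (t - t0) powr (p * q)"
proof -
  have qpos: "q > 0" using q_ge by simp
  define u where "u = (\<lambda>t. t0 + integral {t0..t} (\<lambda>r. lam r powr (1/q)))"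
  define \<tau> where "\<tau> = tau_fun q t0 lam"
  have \<tau>u: "\<And>t. \<tau> t = (1 / q powr q) * u t powr q" by (simp add: \<tau>_def tau_fun_def u_def)
  have lcont: "continuous_on {t0..} (\<lambda>r. lam r powr (1/q))"
    using lam_cont lam_pos by (intro continuous_intros) (force+)
  have u_deriv: "(u has_real_derivative lam t powr (1/q)) (at t within {t0..b})" if "t0 \<le> t" "t \<le> b" for t b
  proof -
    have "((\<lambda>z. integral {t0..z} (\<lambda>r. lam r powr (1/q))) has_real_derivative lam t powr (1/q)) (at t within {t0..b})"
      by (rule integral_has_real_derivative) (use continuous_on_subset[OF lcont] that in auto)
    from DERIV_add[OF DERIV_const[of t0] this] show ?thesis by (simp add: u_def)
  qed
  have u_ge: "u t \<ge> t0" if "t \<ge> t0" for t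
  proof -
    have "integral {t0..t} (\<lambda>r. lam r powr (1/q)) \<ge> 0"
      by (intro integral_nonneg integrable_continuous_interval continuous_on_subset[OF lcont]) auto
    then show ?thesis by (simp add: u_def)
  qed
  have u_pos: "u t > 0" if "t \<ge> t0" for t using u_ge[OF that] t0_pos by simp
  have tau'_pos: "tau' t > 0" if t: "t \<ge> t0" for t
  proof -
    have "((\<lambda>s. u s powr q) has_real_derivative (q * u t powr (q - 1)) * lam t powr (1/q)) (at t within {t0..t+1})"
      by (rule DERIV_chain2[OF has_real_derivative_powr[OF u_pos[OF t]] u_deriv]) (use t in auto)
    from DERIV_cmult[OF this, of "1 / q powr q"]
    have d1: "(\<tau> has_real_derivative (1 / q powr q) * ((q * u t powr (q - 1)) * lam t powr (1/q))) (at t within {t0..t+1})"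
      by (simp add: \<tau>u[abs_def])
    have d2: "(\<tau> has_real_derivative tau' t) (at t within {t0..t+1})"
      using DERIV_subset[OF tau_deriv[OF t]] by (auto simp: \<tau>_def)
    have "tau' t = (1 / q powr q) * ((q * u t powr (q - 1)) * lam t powr (1/q))"
      by (rule deriv_unique_Icc[OF t _ d2 d1]) simp
    moreover have "(1 / q powr q) * ((q * u t powr (q - 1)) * lam t powr (1/q)) > 0"
      using qpos u_pos[OF t] lam_pos[OF t] by simp
    ultimately show ?thesis by simp
  qed
  have \<tau>_pos: "\<tau> t > 0" if "t \<ge> t0" for t
    using u_pos[OF that] qpos by (simp add: \<tau>u)
  have \<tau>_mono: "\<tau> a \<le> \<tau> b" if ab: "t0 \<le> a" "a \<le> b" for a b
  proof -
    have "(\<lambda>s. - \<tau> s) b \<le> (\<lambda>s. - \<tau> s) a"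
    proof (rule decr_within[OF ab(2)])
      fix x assume x: "x \<in> {a..b}"
      show "((\<lambda>s. - \<tau> s) has_real_derivative - tau' x) (at x within {a..b})"
        using DERIV_minus[OF DERIV_subset[OF tau_deriv[of x], of "{a..b}"]] x ab by (auto simp: \<tau>_def)
      show "- tau' x \<le> 0" using tau'_pos[of x] x ab by auto
    qed
    then show ?thesis by simp
  qed
  have grad_mono: "(gradf x - gradf z) \<bullet> (x - z) \<ge> 0" for x z
  proof -
    have "f z \<ge> f x + gradf x \<bullet> (z - x)" by (rule conv_tangent[OF f_convex f_grad])
    moreover have "f x \<ge> f z + gradf z \<bullet> (x - z)" by (rule conv_tangent[OF f_convex f_grad])
    ultimately show ?thesis by (simp add: inner_diff_left inner_diff_right algebra_simps)
  qed
  have y_cont: "continuous_on {t0..} y"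
    unfolding continuous_on_eq_continuous_within using y_deriv has_vector_derivative_continuous by blast
  have phi_mono: "(norm (gradf (y b)))\<^sup>2 \<le> (norm (gradf (y a)))\<^sup>2" if ab: "t0 \<le> a" "a \<le> b" for a b
  proof (rule dini_decr[where \<phi>="\<lambda>s. (norm (gradf (y s)))\<^sup>2", OF ab(2)])
    have "continuous_on {a..b} (\<lambda>s. gradf (y s))"
      using continuous_on_compose2[OF grad_cont continuous_on_subset[OF y_cont]] ab by auto
    then show "continuous_on {a..b} (\<lambda>s. (norm (gradf (y s)))\<^sup>2)" by (intro continuous_intros)
  next
    fix t e :: real assume t: "t \<in> {a..<b}" and e: "e > 0"
    then have t0t: "t0 \<le> t" using ab by auto
    have yd: "(y has_vector_derivative y' t) (at t within {t<..})"
      by (rule has_vector_derivative_within_subset[OF y_deriv[OF t0t]]) (use t0t in auto)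
    have v: "y' t = - tau' t *\<^sub>R gradf (y t)" using ode[OF t0t] by (simp add: eq_neg_iff_add_eq_0)
    show "\<exists>d>0. \<forall>x. t < x \<and> x < t + d \<longrightarrow> (norm (gradf (y x)))\<^sup>2 \<le> (norm (gradf (y t)))\<^sup>2 + e * (x - t)"
      by (rule dini_step[OF grad_mono grad_lip_bdd yd v tau'_pos[OF t0t] e])
  qed
  obtain xs where xs: "\<forall>z. f xs \<le> f z" using argmin_ne by blast
  define E where "E = (\<lambda>t. \<tau> t * (f (y t) - f xs) + (1/2) * ((y t - xs) \<bullet> (y t - xs)))"
  define E' where "E' = (\<lambda>t. tau' t * (f (y t) - f xs) + \<tau> t * (gradf (y t) \<bullet> y' t) + (y t - xs) \<bullet> y' t)"
  have E_deriv: "(E has_real_derivative E' t) (at t within {t0..b})" if tb: "t0 \<le> t" "t \<le> b" for t b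
  proof -
    have d1: "(\<tau> has_real_derivative tau' t) (at t within {t0..b})"
      using DERIV_subset[OF tau_deriv[OF tb(1)]] by (auto simp: \<tau>_def)
    have yv: "(y has_derivative (\<lambda>h. h *\<^sub>R y' t)) (at t within {t0..b})"
      using has_vector_derivative_within_subset[OF y_deriv[OF tb(1)], of "{t0..b}"]
      by (auto simp: has_vector_derivative_def)
    have fy: "((\<lambda>s. f (y s)) has_derivative (\<lambda>h. gradf (y t) \<bullet> (h *\<^sub>R y' t))) (at t within {t0..b})"
      using has_derivative_compose[OF yv f_grad[of "y t"]] by simp
    have e1: "(\<lambda>h. gradf (y t) \<bullet> (h *\<^sub>R y' t)) = (*) (gradf (y t) \<bullet> y' t)"
      by (auto simp: mult.commute)
    have fy': "((\<lambda>s. f (y s)) has_real_derivative (gradf (y t) \<bullet> y' t)) (at t within {t0..b})"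
      using fy unfolding has_field_derivative_def e1 .
    have ym: "((\<lambda>s. y s - xs) has_derivative (\<lambda>h. h *\<^sub>R y' t)) (at t within {t0..b})"
      using has_derivative_diff[OF yv has_derivative_const[of xs]] by simp
    have ip: "((\<lambda>s. (y s - xs) \<bullet> (y s - xs)) has_derivative
        (\<lambda>h. (y t - xs) \<bullet> (h *\<^sub>R y' t) + (h *\<^sub>R y' t) \<bullet> (y t - xs))) (at t within {t0..b})"
      by (rule has_derivative_inner[OF ym ym])
    have e2: "(\<lambda>h. (y t - xs) \<bullet> (h *\<^sub>R y' t) + (h *\<^sub>R y' t) \<bullet> (y t - xs)) = (*) (2 * ((y t - xs) \<bullet> y' t))"
      by (auto simp: inner_commute algebra_simps)
    have ip': "((\<lambda>s. (y s - xs) \<bullet> (y s - xs)) has_real_derivative 2 * ((y t - xs) \<bullet> y' t)) (at t within {t0..b})"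
      using ip unfolding has_field_derivative_def e2 .
    have A: "((\<lambda>s. \<tau> s * (f (y s) - f xs)) has_real_derivative tau' t * (f (y t) - f xs) + (gradf (y t) \<bullet> y' t - 0) * \<tau> t) (at t within {t0..b})"
      by (rule DERIV_mult[OF d1 DERIV_diff[OF fy' DERIV_const]])
    have B: "((\<lambda>s. (1/2) * ((y s - xs) \<bullet> (y s - xs))) has_real_derivative (1/2) * (2 * ((y t - xs) \<bullet> y' t))) (at t within {t0..b})"
      by (rule DERIV_cmult[OF ip'])
    show ?thesis
      using DERIV_add[OF A B] unfolding E_def E'_def by (simp add: algebra_simps)
  qed
  have E'_le: "E' t \<le> - (\<tau> t * tau' t * (norm (gradf (y t)))\<^sup>2)" if t: "t0 \<le> t" for t
  proof -
    have v: "y' t = - tau' t *\<^sub>R gradf (y t)" using ode[OF t] by (simp add: eq_neg_iff_add_eq_0)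
    have cv: "f (y t) - f xs \<le> gradf (y t) \<bullet> (y t - xs)"
      using conv_tangent[OF f_convex f_grad, of "y t" xs] by (simp add: inner_diff_right)
    have "tau' t * (f (y t) - f xs) \<le> tau' t * (gradf (y t) \<bullet> (y t - xs))"
      using cv tau'_pos[OF t] by (intro mult_left_mono) auto
    then show ?thesis unfolding E'_def v
      by (simp add: power2_norm_eq_inner inner_commute algebra_simps)
  qed
  define K where "K = 4 * E t0 + 2 * (\<tau> t0)\<^sup>2 * (norm (gradf (y t0)))\<^sup>2 + 1"
  have E_nn: "E t \<ge> 0" if t: "t \<ge> t0" for t
  proof -
    have "\<tau> t * (f (y t) - f xs) \<ge> 0" using \<tau>_pos[OF t] xs by simp
    then show ?thesis unfolding E_def by simp
  qed
  have Kpos: "K > 0" unfolding K_def using E_nn[of t0] by (simp add: add_nonneg_pos)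
  have bound: "(norm (gradf (y T)))\<^sup>2 * (\<tau> T)\<^sup>2 \<le> K" if T: "T \<ge> t0" for T
  proof -
    define N where "N = (norm (gradf (y T)))\<^sup>2"
    define N0 where "N0 = (norm (gradf (y t0)))\<^sup>2"
    have NN0: "N \<le> N0" unfolding N_def N0_def using phi_mono[OF _ T] by simp
    have N0: "N \<ge> 0" by (simp add: N_def)
    have "(\<lambda>s. E s + (N/2) * (\<tau> s)\<^sup>2) T \<le> (\<lambda>s. E s + (N/2) * (\<tau> s)\<^sup>2) t0"
    proof (rule decr_within[OF T])
      fix x assume x: "x \<in> {t0..T}"
      have d1: "(\<tau> has_real_derivative tau' x) (at x within {t0..T})"
        using DERIV_subset[OF tau_deriv[of x]] x by (auto simp: \<tau>_def)
      have "((\<lambda>s. (\<tau> s)\<^sup>2) has_real_derivative 2 * \<tau> x * tau' x) (at x within {t0..T})"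
        using DERIV_mult[OF d1 d1] by (simp add: power2_eq_square algebra_simps)
      from DERIV_add[OF E_deriv DERIV_cmult[OF this, of "N/2"]] x
      show "((\<lambda>s. E s + (N/2) * (\<tau> s)\<^sup>2) has_real_derivative E' x + N/2 * (2 * \<tau> x * tau' x)) (at x within {t0..T})"
        by auto
      have xx: "t0 \<le> x" "x \<le> T" using x by auto
      have "N \<le> (norm (gradf (y x)))\<^sup>2" unfolding N_def using phi_mono[OF xx] .
      moreover have "\<tau> x * tau' x \<ge> 0" using \<tau>_pos[OF xx(1)] tau'_pos[OF xx(1)] by simp
      ultimately have "\<tau> x * tau' x * N \<le> \<tau> x * tau' x * (norm (gradf (y x)))\<^sup>2"
        by (intro mult_left_mono) auto
      then show "E' x + N/2 * (2 * \<tau> x * tau' x) \<le> 0" using E'_le[OF xx(1)] by (simp add: algebra_simps)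
    qed
    then have main: "E T + (N/2) * (\<tau> T)\<^sup>2 \<le> E t0 + (N/2) * (\<tau> t0)\<^sup>2" by simp
    have ET: "E T \<ge> 0" using E_nn[OF T] .
    have E0: "E t0 \<ge> 0" using E_nn[of t0] by simp
    show ?thesis
    proof (cases "(\<tau> T)\<^sup>2 \<ge> 2 * (\<tau> t0)\<^sup>2")
      case True
      have "N * (\<tau> t0)\<^sup>2 \<le> N * ((\<tau> T)\<^sup>2 / 2)" using True N0 by (intro mult_left_mono) auto
      then have "N * (\<tau> T)\<^sup>2 \<le> 4 * E t0" using main ET by (simp add: algebra_simps)
      then show ?thesis unfolding K_def N_def[symmetric] using E0
        by (smt (verit) mult_nonneg_nonneg zero_le_power2 N0)
    next
      case False
      have "N * (\<tau> T)\<^sup>2 \<le> N0 * (2 * (\<tau> t0)\<^sup>2)" using False NN0 N0 by (intro mult_mono) auto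
      then show ?thesis unfolding K_def N_def[symmetric] N0_def[symmetric] using E0 by (simp add: algebra_simps)
    qed
  qed
  define sK where "sK = sqrt K"
  have sK: "sK > 0" using Kpos by (simp add: sK_def)
  define \<beta> where "\<beta> = (p - 1) / p"
  define \<alpha> where "\<alpha> = (p - 1) / (p * q)"
  define c where "c = q powr (- \<beta>) * sK powr (- \<alpha>)"
  have cpos: "c > 0" using qpos sK by (simp add: c_def)
  have lamlow: "lam t powr (1/q) \<ge> c * u t powr \<beta>" if t: "t \<ge> t0" for t
  proof -
    define n where "n = norm (gradf (y t))"
    have npos: "n > 0"
    proof (rule ccontr)
      assume "\<not> n > 0"
      then have "n = 0" by (simp add: n_def)
      then show False using lam_rel[OF t] by (simp add: n_def)
    qed
    have tp: "\<tau> t > 0" using \<tau>_pos[OF t] .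
    have "(n * \<tau> t)\<^sup>2 \<le> K" using bound[OF t] by (simp add: n_def power_mult_distrib)
    then have "n * \<tau> t \<le> sK" unfolding sK_def by (rule real_le_rsqrt)
    then have nle: "n \<le> sK / \<tau> t" using tp by (simp add: field_simps)
    have lp: "lam t powr p = n powr (- (p - 1))"
    proof -
      have "n powr (p - 1) > 0" using npos by simp
      then have "lam t powr p = 1 / n powr (p - 1)" using lam_rel[OF t] unfolding n_def[symmetric]
        by (simp add: field_simps)
      then show ?thesis using powr_minus_divide[of n "p - 1"] by simp
    qed
    also have "\<dots> \<ge> (sK / \<tau> t) powr (- (p - 1))"
      by (rule powr_mono2'[OF _ npos nle]) (use p_gt in simp)
    also have "(sK / \<tau> t) powr (- (p - 1)) = (\<tau> t / sK) powr (p - 1)"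
      unfolding powr_minus[of _ "p - 1"] using sK tp by (simp add: powr_divide)
    finally have "lam t powr p \<ge> (\<tau> t / sK) powr (p - 1)" .
    then have "(lam t powr p) powr (1 / (p * q)) \<ge> ((\<tau> t / sK) powr (p - 1)) powr (1 / (p * q))"
      by (intro powr_mono2) (use p_gt qpos sK tp in auto)
    then have "lam t powr (1/q) \<ge> (\<tau> t / sK) powr \<alpha>"
      using p_gt qpos lam_pos[OF t] by (simp add: powr_powr \<alpha>_def)
    also have "(\<tau> t / sK) powr \<alpha> = c * u t powr \<beta>"
    proof -
      have "(\<tau> t / sK) powr \<alpha> = \<tau> t powr \<alpha> * sK powr (- \<alpha>)"
        using sK tp by (simp add: powr_divide powr_minus divide_inverse powr_mult inverse_powr)
      moreover have "\<tau> t powr \<alpha> = q powr (- \<beta>) * u t powr \<beta>"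
      proof -
        have "\<tau> t powr \<alpha> = (1 / q powr q) powr \<alpha> * (u t powr q) powr \<alpha>"
          unfolding \<tau>u by (rule powr_mult)
        also have "(u t powr q) powr \<alpha> = u t powr \<beta>"
          using qpos p_gt by (simp add: powr_powr \<alpha>_def \<beta>_def)
        also have "(1 / q powr q) powr \<alpha> = q powr (- \<beta>)"
          using qpos p_gt by (simp add: powr_powr \<alpha>_def \<beta>_def powr_divide powr_minus_divide)
        finally show ?thesis by simp
      qed
      ultimately show ?thesis by (simp add: c_def)
    qed
    finally show ?thesis .
  qed
  define C1 where "C1 = (1 / q powr q) * (c / p) powr (p * q)"
  have C1pos: "C1 > 0" using qpos cpos p_gt by (simp add: C1_def)
  show ?thesis
  proof (intro exI[of _ C1] conjI C1pos allI impI)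
    fix t assume t: "t \<ge> t0"
    define W where "W = (\<lambda>s. u s powr (1/p) - (c/p) * (s - t0))"
    have "(\<lambda>s. - W s) t \<le> (\<lambda>s. - W s) t0"
    proof (rule decr_within[OF t])
      fix x assume x: "x \<in> {t0..t}"
      then have xx: "t0 \<le> x" "x \<le> t" by auto
      have "((\<lambda>s. u s powr (1/p)) has_real_derivative ((1/p) * u x powr (1/p - 1)) * lam x powr (1/q)) (at x within {t0..t})"
        by (rule DERIV_chain2[OF has_real_derivative_powr[OF u_pos[OF xx(1)]] u_deriv[OF xx]])
      from DERIV_minus[OF DERIV_diff[OF this DERIV_cmult[OF DERIV_diff[OF DERIV_ident DERIV_const], of "c/p"]]]
      show "((\<lambda>s. - W s) has_real_derivative - ((1/p) * u x powr (1/p - 1) * lam x powr (1/q) - c/p * (1 - 0))) (at x within {t0..t})"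
        by (simp add: W_def)
      have up: "u x > 0" using u_pos[OF xx(1)] .
      have "u x powr (1/p - 1) * lam x powr (1/q) \<ge> u x powr (1/p - 1) * (c * u x powr \<beta>)"
        using lamlow[OF xx(1)] by (intro mult_left_mono) auto
      also have "u x powr (1/p - 1) * (c * u x powr \<beta>) = c"
      proof -
        have "u x powr (1/p - 1) * u x powr \<beta> = u x powr ((1/p - 1) + \<beta>)" by (simp add: powr_add)
        also have "(1/p - 1) + \<beta> = 0" using p_gt by (simp add: \<beta>_def field_simps)
        finally show ?thesis using up by simp
      qed
      finally have "c \<le> u x powr (1/p - 1) * lam x powr (1/q)" .
      then have "c / p \<le> (1/p) * u x powr (1/p - 1) * lam x powr (1/q)"
        using p_gt by (simp add: divide_right_mono)
      then show "- ((1/p) * u x powr (1/p - 1) * lam x powr (1/q) - c/p * (1 - 0)) \<le> 0" by simp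
    qed
    then have "W t \<ge> W t0" by simp
    moreover have "W t0 \<ge> 0" by (simp add: W_def)
    ultimately have "W t \<ge> 0" by linarith
    then have m: "u t powr (1/p) \<ge> (c/p) * (t - t0)" unfolding W_def by simp
    have mnn: "(c/p) * (t - t0) \<ge> 0" using cpos p_gt t by simp
    have "u t = (u t powr (1/p)) powr p" using u_pos[OF t] p_gt by (simp add: powr_powr)
    also have "\<dots> \<ge> ((c/p) * (t - t0)) powr p" by (rule powr_mono2) (use p_gt mnn m in auto)
    finally have ul: "u t \<ge> ((c/p) * (t - t0)) powr p" .
    have "\<tau> t = (1 / q powr q) * u t powr q" by (rule \<tau>u)
    also have "\<dots> \<ge> (1 / q powr q) * (((c/p) * (t - t0)) powr p) powr q"
      by (intro mult_left_mono powr_mono2) (use qpos ul in auto)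
    also have "(((c/p) * (t - t0)) powr p) powr q = (c/p) powr (p * q) * (t - t0) powr (p * q)"
      using powr_mult[of "c/p" "t - t0" "p * q"] by (simp add: powr_powr)
    finally show "tau_fun q t0 lam t \<ge> C1 * (t - t0) powr (p * q)"
      by (simp add: C1_def \<tau>_def mult.assoc)
  qed
qed

end
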